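(* Let $N\ge1$ and $1\le m\le N$ be integers and let $D_{N,m}=|D_{N,m}\rangle\langle D_{N,m}|$. Then $C_S(D_{N,m})\ge N-2m+1$.
   Context: The Dicke state is $|D_{N,m}\rangle=\binom{N}{m}^{-1/2}\sum_\pi|0\rangle^{\otimes(N-m)}|1\rangle^{\otimes m}$, the normalized uniform superposition of all $N$-bit computational basis states of Hamming weight $m$. $\mathbb{I},\sigma_X,\sigma_Y,\sigma_Z$ are the identity and Pauli matrices. The notation $\sum_\pi \mathbb{I}^{\otimes j}\otimes A^{\otimes (N-j)}$ denotes the sum, over all distinct placements, of tensor products in which exactly $j$ of the $N$ factors are $\mathbb{I}$ and the other $N-j$ are $A$ (each distinct arrangement counted once). Measurement complexity: for an $N$-qubit permutation-invariant operator $\rho$, $C_S(\rho)$ is the minimal $n_A$ such that there exist real $b_i,c_i,d_i$ and real $\alpha_{ij}$ ($1\le i\le n_A$, $0\le j\le N$) with $\rho=\sum_{i=1}^{n_A}\sum_{j=0}^{N}\alpha_{ij}\sum_\pi\mathbb{I}^{\otimes j}\otimes A_i^{\otimes(N-j)}$, $A_i=b_i\sigma_X+c_i\sigma_Y+d_i\sigma_Z$. *)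

theory Defs
  imports Complex_Main "HOL-Library.Extended_Nat"
begin

text \<open>Computational basis states of N qubits: bit strings x :: nat \<Rightarrow> bool with x k = False
  for k \<ge> N (bit k is the state of qubit k; False = |0>, True = |1>).
  An N-qubit operator is represented by its matrix entries op x y = <x|op|y>,
  a single-qubit operator by a function bool \<Rightarrow> bool \<Rightarrow> complex.\<close>

definition bitstrings :: "nat \<Rightarrow> (nat \<Rightarrow> bool) set" where
  "bitstrings N = {x. \<forall>k. N \<le> k \<longrightarrow> \<not> x k}"

type_synonym qop = "(nat \<Rightarrow> bool) \<Rightarrow> (nat \<Rightarrow> bool) \<Rightarrow> complex"
type_synonym qop1 = "bool \<Rightarrow> bool \<Rightarrow> complex"

definition ident1 :: qop1 where "ident1 a b = (if a = b then 1 else 0)"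
definition sigmaX :: qop1 where "sigmaX a b = (if a \<noteq> b then 1 else 0)"
definition sigmaY :: qop1 where
  "sigmaY a b = (if \<not> a \<and> b then - \<i> else if a \<and> \<not> b then \<i> else 0)"
definition sigmaZ :: qop1 where
  "sigmaZ a b = (if a = b then (if a then -1 else 1) else 0)"

definition pauli_comb :: "real \<Rightarrow> real \<Rightarrow> real \<Rightarrow> qop1" where
  "pauli_comb b c d u v = of_real b * sigmaX u v + of_real c * sigmaY u v + of_real d * sigmaZ u v"

text \<open>sum over all placements of j identities and N-j copies of A:
  \<Sum>_\<pi> I^{\<otimes> j} \<otimes> A^{\<otimes>(N-j)}. The set S is the set of positions carrying the identity.\<close>
definition sym_term :: "nat \<Rightarrow> nat \<Rightarrow> qop1 \<Rightarrow> qop" where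
  "sym_term N j A x y =
     (\<Sum>S \<in> {S. S \<subseteq> {..<N} \<and> card S = j}.
        \<Prod>k<N. (if k \<in> S then ident1 else A) (x k) (y k))"

definition hweight :: "nat \<Rightarrow> (nat \<Rightarrow> bool) \<Rightarrow> nat" where
  "hweight N x = card {k. k < N \<and> x k}"

definition dicke :: "nat \<Rightarrow> nat \<Rightarrow> (nat \<Rightarrow> bool) \<Rightarrow> complex" where
  "dicke N m x = (if x \<in> bitstrings N \<and> hweight N x = m
                  then of_real (1 / sqrt (real (N choose m))) else 0)"

definition dicke_proj :: "nat \<Rightarrow> nat \<Rightarrow> qop" where
  "dicke_proj N m x y = dicke N m x * cnj (dicke N m y)"

definition decomposable :: "nat \<Rightarrow> qop \<Rightarrow> nat \<Rightarrow> bool" where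
  "decomposable N \<rho> n \<longleftrightarrow>
    (\<exists>(b::nat \<Rightarrow> real) (c::nat \<Rightarrow> real) (d::nat \<Rightarrow> real) (\<alpha>::nat \<Rightarrow> nat \<Rightarrow> real).
       \<forall>x \<in> bitstrings N. \<forall>y \<in> bitstrings N.
         \<rho> x y = (\<Sum>i\<in>{1..n}. \<Sum>j\<le>N. of_real (\<alpha> i j) * sym_term N j (pauli_comb (b i) (c i) (d i)) x y))"

text \<open>Measurement complexity C_S (the minimum; \<infinity> if no decomposition exists).\<close>
definition meas_complexity :: "nat \<Rightarrow> qop \<Rightarrow> enat" where
  "meas_complexity N \<rho> = Inf {enat n | n. decomposable N \<rho> n}"

end

theory Submission
  imports Defs
begin

lemma bs_0: "bitstrings 0 = {\<lambda>_. False}"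
  by (auto simp: bitstrings_def)

lemma bs_Suc: "bitstrings (Suc N) = bitstrings N \<union> (\<lambda>x. x(N:=True)) ` bitstrings N"
proof
  show "bitstrings (Suc N) \<subseteq> bitstrings N \<union> (\<lambda>x. x(N:=True)) ` bitstrings N"
  proof
    fix x assume x: "x \<in> bitstrings (Suc N)"
    show "x \<in> bitstrings N \<union> (\<lambda>x. x(N:=True)) ` bitstrings N"
    proof (cases "x N")
      case True
      have "x(N:=False) \<in> bitstrings N" using x
        by (auto simp: bitstrings_def)
      moreover have "x = (x(N:=False))(N:=True)" using True by (simp add: fun_eq_iff)
      ultimately show ?thesis by blast
    next
      case False
      then have "x \<in> bitstrings N" using x
        by (auto simp: bitstrings_def) (metis Suc_leI le_neq_implies_less)
      thus ?thesis by blast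
    qed
  qed
  show "bitstrings N \<union> (\<lambda>x. x(N:=True)) ` bitstrings N \<subseteq> bitstrings (Suc N)"
    by (auto simp: bitstrings_def)
qed

lemma finite_bs: "finite (bitstrings N)"
  by (induct N) (simp_all add: bs_Suc bs_0)

lemma sum_prod_bs:
  fixes f :: "nat \<Rightarrow> bool \<Rightarrow> 'a::comm_semiring_1"
  shows "(\<Sum>x\<in>bitstrings N. \<Prod>k<N. f k (x k)) = (\<Prod>k<N. f k False + f k True)"
proof (induct N)
  case 0 show ?case by (simp add: bs_0)
next
  case (Suc N)
  have disj: "bitstrings N \<inter> (\<lambda>x. x(N:=True)) ` bitstrings N = {}"
    by (auto simp: bitstrings_def)
  have inj: "inj_on (\<lambda>x. x(N:=True)) (bitstrings N)"
    unfolding inj_on_def bitstrings_def by (auto simp: fun_eq_iff)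
  have s1: "(\<Sum>x\<in>bitstrings N. \<Prod>k<Suc N. f k (x k))
      = (\<Sum>x\<in>bitstrings N. \<Prod>k<N. f k (x k)) * f N False"
    by (simp add: sum_distrib_right bitstrings_def)
  have s2: "(\<Sum>x\<in>(\<lambda>x. x(N:=True)) ` bitstrings N. \<Prod>k<Suc N. f k (x k))
      = (\<Sum>x\<in>bitstrings N. \<Prod>k<N. f k (x k)) * f N True"
  proof -
    have "(\<Sum>x\<in>(\<lambda>x. x(N:=True)) ` bitstrings N. \<Prod>k<Suc N. f k (x k))
        = (\<Sum>x\<in>bitstrings N. \<Prod>k<Suc N. f k ((x(N:=True)) k))"
      by (simp add: sum.reindex[OF inj])
    also have "\<dots> = (\<Sum>x\<in>bitstrings N. (\<Prod>k<N. f k (x k)) * f N True)"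
    proof (rule sum.cong[OF refl])
      fix x
      have "(\<Prod>k<N. f k ((x(N:=True)) k)) = (\<Prod>k<N. f k (x k))"
        by (rule prod.cong) auto
      thus "(\<Prod>k<Suc N. f k ((x(N:=True)) k)) = (\<Prod>k<N. f k (x k)) * f N True"
        by simp
    qed
    finally show ?thesis by (simp add: sum_distrib_right)
  qed
  have "(\<Sum>x\<in>bitstrings (Suc N). \<Prod>k<Suc N. f k (x k))
     = (\<Sum>x\<in>bitstrings N. \<Prod>k<Suc N. f k (x k))
       + (\<Sum>x\<in>(\<lambda>x. x(N:=True)) ` bitstrings N. \<Prod>k<Suc N. f k (x k))"
    unfolding bs_Suc by (rule sum.union_disjoint[OF finite_bs _ disj]) (simp add: finite_bs)
  also have "\<dots> = (\<Prod>k<Suc N. f k False + f k True)"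
    unfolding s1 s2 Suc by (simp add: distrib_left)
  finally show ?case .
qed

lemma sum2_prod_bs:
  fixes g :: "nat \<Rightarrow> bool \<Rightarrow> bool \<Rightarrow> 'a::comm_semiring_1"
  shows "(\<Sum>x\<in>bitstrings N. \<Sum>y\<in>bitstrings N. \<Prod>k<N. g k (x k) (y k))
     = (\<Prod>k<N. g k False False + g k False True + (g k True False + g k True True))"
proof -
  have "\<And>x. (\<Sum>y\<in>bitstrings N. \<Prod>k<N. g k (x k) (y k))
     = (\<Prod>k<N. g k (x k) False + g k (x k) True)"
    by (rule sum_prod_bs)
  then show ?thesis
    using sum_prod_bs[of "\<lambda>k u. g k u False + g k u True" N] by simp
qed

definition tr1 :: "qop1 \<Rightarrow> qop1 \<Rightarrow> complex" where
  "tr1 A W = A False False * W False False + A False True * W True False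
     + (A True False * W False True + A True True * W True True)"

definition phi :: "nat \<Rightarrow> (nat \<Rightarrow> qop1) \<Rightarrow> qop \<Rightarrow> complex" where
  "phi N W \<rho> = (\<Sum>x\<in>bitstrings N. \<Sum>y\<in>bitstrings N. \<rho> x y * (\<Prod>k<N. W k (y k) (x k)))"

lemma phi_prod:
  "phi N W (\<lambda>x y. \<Prod>k<N. B k (x k) (y k)) = (\<Prod>k<N. tr1 (B k) (W k))"
  unfolding phi_def tr1_def
  using sum2_prod_bs[of "\<lambda>k u v. B k u v * W k v u" N]
  by (simp add: prod.distrib[symmetric])

lemma phi_sum:
  "phi N W (\<lambda>x y. \<Sum>i\<in>I. f i x y) = (\<Sum>i\<in>I. phi N W (f i))"
proof -
  have "phi N W (\<lambda>x y. \<Sum>i\<in>I. f i x y)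
     = (\<Sum>x\<in>bitstrings N. \<Sum>y\<in>bitstrings N. \<Sum>i\<in>I. f i x y * (\<Prod>k<N. W k (y k) (x k)))"
    unfolding phi_def by (simp add: sum_distrib_right)
  also have "\<dots> = (\<Sum>x\<in>bitstrings N. \<Sum>i\<in>I. \<Sum>y\<in>bitstrings N. f i x y * (\<Prod>k<N. W k (y k) (x k)))"
    by (rule sum.cong[OF refl], rule sum.swap)
  also have "\<dots> = (\<Sum>i\<in>I. phi N W (f i))"
    unfolding phi_def by (rule sum.swap)
  finally show ?thesis .
qed

lemma phi_scale: "phi N W (\<lambda>x y. c * f x y) = c * phi N W f"
  unfolding phi_def by (simp add: sum_distrib_left mult.assoc)

lemma phi_cong:
  "(\<And>x y. x \<in> bitstrings N \<Longrightarrow> y \<in> bitstrings N \<Longrightarrow> \<rho> x y = \<rho>' x y)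
   \<Longrightarrow> phi N W \<rho> = phi N W \<rho>'"
  unfolding phi_def by (intro sum.cong) auto

lemma phi_sym:
  assumes tl: "\<forall>k<N. W k False False + W k True True = 0"
  shows "phi N W (sym_term N j A) = (if j = 0 then \<Prod>k<N. tr1 A (W k) else 0)"
proof -
  have "phi N W (sym_term N j A) = (\<Sum>S\<in>{S. S \<subseteq> {..<N} \<and> card S = j}.
        phi N W (\<lambda>x y. \<Prod>k<N. (if k \<in> S then ident1 else A) (x k) (y k)))"
    unfolding sym_term_def[abs_def] by (rule phi_sum)
  also have "\<dots> = (\<Sum>S\<in>{S. S \<subseteq> {..<N} \<and> card S = j}.
        \<Prod>k<N. tr1 (if k \<in> S then ident1 else A) (W k))"
    by (intro sum.cong refl) (rule phi_prod)
  also have "\<dots> = (if j = 0 then \<Prod>k<N. tr1 A (W k) else 0)"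
  proof (cases "j = 0")
    case True
    have "{S. S \<subseteq> {..<N} \<and> card S = j} = {{}}"
      using True by (auto dest: finite_subset[OF _ finite_lessThan])
    then show ?thesis using True by simp
  next
    case False
    have zero: "(\<Prod>k<N. tr1 (if k \<in> S then ident1 else A) (W k)) = 0"
      if "S \<subseteq> {..<N}" "card S = j" for S
    proof -
      from that False obtain k where "k \<in> S" by (metis card.empty ex_in_conv)
      then have "k < N" "tr1 (if k \<in> S then ident1 else A) (W k) = 0"
        using that tl by (auto simp: tr1_def ident1_def)
      then show ?thesis by (metis finite_lessThan lessThan_iff prod_zero)
    qed
    have "(\<Sum>S\<in>{S. S \<subseteq> {..<N} \<and> card S = j}.
        \<Prod>k<N. tr1 (if k \<in> S then ident1 else A) (W k)) = 0"
    proof (rule sum.neutral, rule ballI)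
      fix S assume "S \<in> {S. S \<subseteq> {..<N} \<and> card S = j}"
      then show "(\<Prod>k<N. tr1 (if k \<in> S then ident1 else A) (W k)) = 0"
        using zero by blast
    qed
    then show ?thesis using False by simp
  qed
  finally show ?thesis .
qed

lemma weight_split:
  assumes "L \<le> N"
  shows "hweight N x = card {k. k < L \<and> x k} + card {k. L \<le> k \<and> k < N \<and> x k}"
proof -
  have "{k. k < N \<and> x k} = {k. k < L \<and> x k} \<union> {k. L \<le> k \<and> k < N \<and> x k}"
    using assms by auto
  moreover have "finite {k. k < L \<and> x k}" "finite {k. L \<le> k \<and> k < N \<and> x k}"
    by auto
  ultimately show ?thesis unfolding hweight_def
    by (simp add: card_Un_disjoint disjoint_iff)
qed

lemma compl_count:
  assumes "\<forall>k. L \<le> k \<and> k < N \<longrightarrow> x k \<noteq> y k"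
  shows "card {k. L \<le> k \<and> k < N \<and> x k} + card {k. L \<le> k \<and> k < N \<and> y k} = N - L"
proof -
  have "{k. L \<le> k \<and> k < N \<and> x k} \<union> {k. L \<le> k \<and> k < N \<and> y k} = {L..<N}"
    using assms by auto
  moreover have "finite {k. L \<le> k \<and> k < N \<and> x k}" "finite {k. L \<le> k \<and> k < N \<and> y k}"
    by auto
  moreover have "{k. L \<le> k \<and> k < N \<and> x k} \<inter> {k. L \<le> k \<and> k < N \<and> y k} = {}"
    using assms by auto
  ultimately show ?thesis by (metis card_Un_disjoint card_atLeastLessThan)
qed

lemma claimA:
  assumes "hweight N x = m" "hweight N y = m" "2*m \<le> N"
    and "\<forall>k. N - 2*m \<le> k \<and> k < N \<longrightarrow> x k \<noteq> y k"
  shows "\<forall>k < N - 2*m. \<not> x k \<and> \<not> y k"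
proof -
  let ?L = "N - 2*m"
  have "card {k. k < ?L \<and> x k} + card {k. k < ?L \<and> y k} = 0"
    using weight_split[of ?L N x] weight_split[of ?L N y] compl_count[OF assms(4)] assms(1-3)
    by linarith
  then have "{k. k < ?L \<and> x k} = {}" "{k. k < ?L \<and> y k} = {}" by auto
  then show ?thesis by blast
qed

lemma prod_W:
  assumes "hweight N x = m" "hweight N y = m" "2*m \<le> N"
    and W1: "\<forall>k<N-2*m. W k False False = 1" and W2: "\<forall>k. N-2*m \<le> k \<longrightarrow> W k = sigmaX"
  shows "(\<Prod>k<N. W k (y k) (x k)) = (if (\<forall>k<N-2*m. \<not>x k \<and> \<not>y k) \<and>
            (\<forall>k. N-2*m \<le> k \<and> k<N \<longrightarrow> x k \<noteq> y k) then 1 else 0)"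
proof (cases "\<forall>k. N-2*m \<le> k \<and> k<N \<longrightarrow> x k \<noteq> y k")
  case True
  have c: "\<forall>k<N-2*m. \<not>x k \<and> \<not>y k" using claimA[OF assms(1-3) True] .
  have "(\<Prod>k<N. W k (y k) (x k)) = (\<Prod>k<N. 1)"
  proof (rule prod.cong[OF refl])
    fix k assume "k \<in> {..<N}"
    then show "W k (y k) (x k) = 1"
      using c True W1 W2 by (cases "k < N - 2*m") (auto simp: sigmaX_def)
  qed
  then show ?thesis using True c by simp
next
  case False
  then obtain k where k: "N-2*m \<le> k" "k < N" "x k = y k" by blast
  then have "W k (y k) (x k) = 0" using W2 by (simp add: sigmaX_def)
  then have z: "(\<Prod>k<N. W k (y k) (x k)) = 0" using k by (metis finite_lessThan lessThan_iff prod_zero)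
  show ?thesis by (subst if_not_P) (use False in blast, rule z)
qed

lemma phi_dicke:
  assumes "1 \<le> m" "2*m \<le> N"
    and W1: "\<forall>k<N-2*m. W k False False = 1" and W2: "\<forall>k. N-2*m \<le> k \<longrightarrow> W k = sigmaX"
  shows "phi N W (dicke_proj N m) \<noteq> 0"
proof -
  define L where "L = N - 2*m"
  define r where "r = 1 / sqrt (real (N choose m))"
  have rnz: "r \<noteq> 0" unfolding r_def using assms by simp
  define P where "P x y \<longleftrightarrow> hweight N x = m \<and> hweight N y = m \<and> (\<forall>k<L. \<not>x k \<and> \<not>y k) \<and>
            (\<forall>k. L \<le> k \<and> k<N \<longrightarrow> x k \<noteq> y k)" for x y
  have sq: "complex_of_real (sqrt (real (N choose m))) * complex_of_real (sqrt (real (N choose m))) = of_nat (N choose m)"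
    by (simp add: of_real_mult[symmetric] del: of_real_mult)
  have term_eq: "dicke_proj N m x y * (\<Prod>k<N. W k (y k) (x k))
      = of_real (r*r) * (if P x y then 1 else 0)"
    if "x \<in> bitstrings N" "y \<in> bitstrings N" for x y
  proof (cases "hweight N x = m \<and> hweight N y = m")
    case True
    then show ?thesis using that prod_W[of N x m y W] assms
      by (simp add: dicke_proj_def dicke_def P_def L_def r_def sq)
  next
    case False
    then show ?thesis by (auto simp: dicke_proj_def dicke_def P_def)
  qed
  have "phi N W (dicke_proj N m) = (\<Sum>x\<in>bitstrings N. \<Sum>y\<in>bitstrings N.
          of_real (r*r) * (if P x y then 1 else 0))"
    unfolding phi_def by (intro sum.cong refl) (simp add: term_eq)
  also have "\<dots> = of_real (r*r) * of_nat (\<Sum>x\<in>bitstrings N. \<Sum>y\<in>bitstrings N. (if P x y then 1 else 0::nat))"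
    by (simp add: sum_distrib_left of_nat_sum) (intro sum.cong refl, simp)
  finally have eq: "phi N W (dicke_proj N m) = of_real (r*r) * of_nat (\<Sum>x\<in>bitstrings N. \<Sum>y\<in>bitstrings N. (if P x y then 1 else 0::nat))" .
  define x0 where "x0 k \<longleftrightarrow> L \<le> k \<and> k < L + m" for k
  define y0 where "y0 k \<longleftrightarrow> L + m \<le> k \<and> k < N" for k
  have x0b: "x0 \<in> bitstrings N" using assms by (auto simp: x0_def bitstrings_def L_def)
  have y0b: "y0 \<in> bitstrings N" by (auto simp: y0_def bitstrings_def)
  have "{k. k < N \<and> x0 k} = {L..<L+m}" using assms by (auto simp: x0_def L_def)
  then have hx: "hweight N x0 = m" by (simp add: hweight_def)
  have "{k. k < N \<and> y0 k} = {L+m..<N}" using assms by (auto simp: y0_def L_def)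
  then have hy: "hweight N y0 = m" using assms by (simp add: hweight_def L_def)
  have P0: "P x0 y0" using hx hy assms by (auto simp: P_def x0_def y0_def L_def)
  have "(\<Sum>x\<in>bitstrings N. \<Sum>y\<in>bitstrings N. (if P x y then 1 else 0::nat)) \<noteq> 0"
    using x0b y0b P0 by (simp add: finite_bs sum_eq_0_iff) blast
  then show ?thesis using eq rnz by (simp del: of_nat_sum)
qed

definition Wm :: "complex \<Rightarrow> qop1" where
  "Wm p u v = (if u = v then (if u then -1 else 1) else if u then 0 else p)"

lemma tr_Wm: "tr1 (pauli_comb b c d) (Wm p) = 2 * of_real d + (of_real b + \<i> * of_real c) * p"
  by (simp add: tr1_def pauli_comb_def sigmaX_def sigmaY_def sigmaZ_def Wm_def algebra_simps)

lemma tr_X: "tr1 (pauli_comb b c d) sigmaX = 2 * of_real b"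
  by (simp add: tr1_def pauli_comb_def sigmaX_def sigmaY_def sigmaZ_def algebra_simps)

theorem theorem5:
  fixes N m :: nat
  assumes "1 \<le> N" and "1 \<le> m" and "m \<le> N"
  shows "enat (N + 1 - 2 * m) \<le> meas_complexity N (dicke_proj N m)"
proof -
  have key: "N + 1 - 2*m \<le> n" if dec: "decomposable N (dicke_proj N m) n" for n
  proof (rule ccontr)
    assume "\<not> N + 1 - 2*m \<le> n"
    then have nL: "n \<le> N - 2*m" and m2: "2*m \<le> N" by auto
    from dec obtain b c d \<alpha> where eqn: "\<forall>x\<in>bitstrings N. \<forall>y\<in>bitstrings N.
        dicke_proj N m x y = (\<Sum>i\<in>{1..n}. \<Sum>j\<le>N. of_real (\<alpha> i j) *
            sym_term N j (pauli_comb (b i) (c i) (d i)) x y)"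
      unfolding decomposable_def by blast
    define pp where "pp i = -2 * of_real (d i) / (of_real (b i) + \<i> * of_real (c i))" for i
    define W where "W k = (if k < N - 2*m then Wm (pp (Suc k)) else sigmaX)" for k
    have tl: "\<forall>k<N. W k False False + W k True True = 0"
      by (simp add: W_def Wm_def sigmaX_def)
    have W1: "\<forall>k<N-2*m. W k False False = 1" by (simp add: W_def Wm_def)
    have W2: "\<forall>k. N-2*m \<le> k \<longrightarrow> W k = sigmaX" by (simp add: W_def)
    have nz: "phi N W (dicke_proj N m) \<noteq> 0"
      by (rule phi_dicke) (use assms m2 W1 W2 in auto)
    have zero: "phi N W (sym_term N j (pauli_comb (b i) (c i) (d i))) = 0"
      if "i \<in> {1..n}" for i j
    proof -
      have "(\<Prod>k<N. tr1 (pauli_comb (b i) (c i) (d i)) (W k)) = 0"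
      proof (cases "of_real (b i) + \<i> * of_real (c i) = (0::complex)")
        case True
        then have b0: "b i = 0" by (simp add: complex_eq_iff)
        have k: "N - 1 < N" "N - 2*m \<le> N - 1" using assms m2 by auto
        then have "tr1 (pauli_comb (b i) (c i) (d i)) (W (N-1)) = 0"
          using b0 by (simp add: W_def tr_X)
        then show ?thesis using k by (metis finite_lessThan lessThan_iff prod_zero)
      next
        case False
        have k: "i - 1 < N - 2*m" "i - 1 < N" using that nL m2 by auto
        moreover have "Suc (i-1) = i" using that by auto
        ultimately have "tr1 (pauli_comb (b i) (c i) (d i)) (W (i-1)) = 0"
          using False by (simp add: W_def tr_Wm pp_def)
        then show ?thesis using k by (metis finite_lessThan lessThan_iff prod_zero)
      qed
      then show ?thesis using phi_sym[of N W, OF tl] by simp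
    qed
    have "phi N W (dicke_proj N m) = phi N W (\<lambda>x y. \<Sum>i\<in>{1..n}. \<Sum>j\<le>N. of_real (\<alpha> i j) *
            sym_term N j (pauli_comb (b i) (c i) (d i)) x y)"
      using eqn by (intro phi_cong) auto
    also have "\<dots> = 0" by (simp add: phi_sum phi_scale zero)
    finally show False using nz by simp
  qed
  show ?thesis unfolding meas_complexity_def
    by (rule Inf_greatest) (auto dest: key)
qed

end
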